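(* Let $K$ be a field of characteristic $0$. Let $m=x_1^{\alpha_1}\cdots x_n^{\alpha_n}$ with $\alpha_i\ge1$ for all $i$, let $d=\alpha_1+\cdots+\alpha_n$, and let $f$ be in the orbit of $m$, i.e., $f(x)=m(A.x)$ for some $A\in GL_n(K)$. Then the centralizer $C(\mathfrak{g}_f)$ is of dimension $n$. Moreover, there is a unique $H\in C(\mathfrak{g}_f)$ such that $\mathrm{Tr}\,H=d$ and $\mathrm{Tr}(HM)=0$ for all $M\in\mathfrak{g}_f$. The matrix $H$ is diagonalizable, its eigenvalues are $(\alpha_1,\ldots,\alpha_n)$, and $C(\mathfrak{g}_f)=\mathfrak{g}_f\oplus\mathrm{Span}(H)$.
   Context: For $P\in K[x_1,\ldots,x_n]$, the Lie algebra $\mathfrak{g}_P$ of $P$ is the Lie algebra of the group of invariants $\{A\in GL_n(K): P(A.x)=P(x)\}$; equivalently, $\mathfrak{g}_P$ is the linear subspace of matrices $A=(a_{ij})\in M_n(K)$ such that $\sum_{i,j\in[n]} a_{ij}\,x_j\,\frac{\partial P}{\partial x_i}=0$. For a set $S\subseteq M_n(K)$, the centralizer $C(S)$ is the linear subspace of matrices commuting with every element of $S$. *)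

theory Defs
  imports "HOL-Analysis.Analysis" "HOL-Library.Poly_Mapping"
begin

type_synonym ('n, 'a) mpoly = "('n \<Rightarrow>\<^sub>0 nat) \<Rightarrow>\<^sub>0 'a"

definition Var :: "'n \<Rightarrow> ('n, 'a::comm_ring_1) mpoly" where
  "Var i = Poly_Mapping.single (Poly_Mapping.single i 1) 1"

definition Const :: "'a::comm_ring_1 \<Rightarrow> ('n, 'a) mpoly" where
  "Const c = Poly_Mapping.single 0 c"

definition pderiv_mp :: "'n \<Rightarrow> ('n, 'a::comm_ring_1) mpoly \<Rightarrow> ('n, 'a) mpoly" where
  "pderiv_mp i p = (\<Sum>m\<in>Poly_Mapping.keys p.
      Poly_Mapping.single (m - Poly_Mapping.single i 1) (of_nat (Poly_Mapping.lookup m i) * Poly_Mapping.lookup p m))"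

definition lin_subst :: "'a::comm_ring_1^'n^'n \<Rightarrow> 'n \<Rightarrow> ('n::finite, 'a) mpoly" where
  "lin_subst A i = (\<Sum>j\<in>UNIV. Const (A $ i $ j) * Var j)"

definition lie_alg :: "('n::finite, 'a::field) mpoly \<Rightarrow> ('a^'n^'n) set" where
  "lie_alg P = {M. (\<Sum>i\<in>UNIV. \<Sum>j\<in>UNIV. Const (M $ i $ j) * Var j * pderiv_mp i P) = 0}"

definition centralizer :: "('a::field^'n^'n) set \<Rightarrow> ('a^'n^'n) set" where
  "centralizer S = {B. \<forall>M\<in>S. B ** M = M ** B}"

definition mscale :: "'a::field \<Rightarrow> 'a^'n^'n \<Rightarrow> 'a^'n^'n" where
  "mscale c M = (\<chi> i j. c * M $ i $ j)"

interpretation mat: vector_space "mscale :: 'a::field \<Rightarrow> 'a^'n^'n \<Rightarrow> 'a^'n^'n"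
  by unfold_locales (auto simp: mscale_def vec_eq_iff algebra_simps)

definition diag_mat :: "('n \<Rightarrow> 'a::semiring_1) \<Rightarrow> 'a^'n^'n" where
  "diag_mat v = (\<chi> i j. if i = j then v i else 0)"

end

theory Submission
  imports Defs
begin


definition lext :: "(('n \<Rightarrow>\<^sub>0 nat) \<Rightarrow> 'a::zero \<Rightarrow> 'b::comm_monoid_add) \<Rightarrow> (('n \<Rightarrow>\<^sub>0 nat) \<Rightarrow>\<^sub>0 'a) \<Rightarrow> 'b" where
  "lext \<phi> p = (\<Sum>m\<in>Poly_Mapping.keys p. \<phi> m (Poly_Mapping.lookup p m))"

locale addfun2 =
  fixes \<phi> :: "('n \<Rightarrow>\<^sub>0 nat) \<Rightarrow> 'a::comm_monoid_add \<Rightarrow> 'b::ab_group_add"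
  assumes add: "\<phi> m (a + b) = \<phi> m a + \<phi> m b"
begin

lemma zero[simp]: "\<phi> m 0 = 0"
proof -
  have "\<phi> m (0 + 0) = \<phi> m 0 + \<phi> m 0" by (rule add)
  then show ?thesis
    by simp
qed

lemma lext_superset:
  assumes "finite S" "Poly_Mapping.keys p \<subseteq> S"
  shows "lext \<phi> p = (\<Sum>m\<in>S. \<phi> m (Poly_Mapping.lookup p m))"
  unfolding lext_def
  by (rule sum.mono_neutral_left) (use assms in \<open>auto simp: in_keys_iff\<close>)

lemma lext_add: "lext \<phi> (p + q) = lext \<phi> p + lext \<phi> q"
proof -
  let ?S = "Poly_Mapping.keys p \<union> Poly_Mapping.keys q"
  have "lext \<phi> (p + q) = (\<Sum>m\<in>?S. \<phi> m (Poly_Mapping.lookup (p+q) m))"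
    by (rule lext_superset) (auto simp: keys_add)
  also have "\<dots> = (\<Sum>m\<in>?S. \<phi> m (Poly_Mapping.lookup p m)) + (\<Sum>m\<in>?S. \<phi> m (Poly_Mapping.lookup q m))"
    by (simp add: lookup_add add sum.distrib)
  also have "\<dots> = lext \<phi> p + lext \<phi> q"
    by (simp add: lext_superset[symmetric])
  finally show ?thesis .
qed

lemma lext_zero[simp]: "lext \<phi> 0 = 0"
  by (simp add: lext_def)

lemma lext_single[simp]: "lext \<phi> (Poly_Mapping.single m c) = \<phi> m c"
  by (subst lext_superset[of "{m}"]) auto

lemma lext_sum: "lext \<phi> (sum g S) = (\<Sum>x\<in>S. lext \<phi> (g x))"
  by (induction S rule: infinite_finite_induct) (auto simp: lext_add)

end

lemma poly_mapping_expand: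
  "p = (\<Sum>m\<in>Poly_Mapping.keys p. Poly_Mapping.single m (Poly_Mapping.lookup p m))"
  by (rule poly_mapping_eqI)
     (auto simp: lookup_sum lookup_single when_def in_keys_iff sum.delta' split: if_splits)

lemma poly_mapping_mult_expand:
  fixes p q :: "('n \<Rightarrow>\<^sub>0 nat) \<Rightarrow>\<^sub>0 'a::comm_ring_1"
  shows "p * q = (\<Sum>m\<in>Poly_Mapping.keys p. \<Sum>m'\<in>Poly_Mapping.keys q.
     Poly_Mapping.single (m + m') (Poly_Mapping.lookup p m * Poly_Mapping.lookup q m'))"
proof -
  have "p * q = (\<Sum>m\<in>Poly_Mapping.keys p. Poly_Mapping.single m (Poly_Mapping.lookup p m)) *
     (\<Sum>m'\<in>Poly_Mapping.keys q. Poly_Mapping.single m' (Poly_Mapping.lookup q m'))"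
    by (rule arg_cong2[where f="(*)"]; rule poly_mapping_expand)
  also have "\<dots> = (\<Sum>m\<in>Poly_Mapping.keys p. \<Sum>m'\<in>Poly_Mapping.keys q.
     Poly_Mapping.single m (Poly_Mapping.lookup p m) * Poly_Mapping.single m' (Poly_Mapping.lookup q m'))"
    by (simp add: sum_product)
  finally show ?thesis by (simp only: mult_single)
qed


definition pdf :: "'n \<Rightarrow> ('n \<Rightarrow>\<^sub>0 nat) \<Rightarrow> 'a::comm_ring_1 \<Rightarrow> ('n, 'a) mpoly" where
  "pdf i m c = Poly_Mapping.single (m - Poly_Mapping.single i 1) (of_nat (Poly_Mapping.lookup m i) * c)"

lemma pdf_addfun: "addfun2 (pdf i)"
  by unfold_locales (simp add: pdf_def distrib_left single_add)

lemma pderiv_lext: "pderiv_mp i p = lext (pdf i) p"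
  by (simp add: pderiv_mp_def lext_def pdf_def)

lemma pderiv_add: "pderiv_mp i (p + q) = pderiv_mp i p + pderiv_mp i q"
  by (simp add: pderiv_lext addfun2.lext_add[OF pdf_addfun])

lemma pderiv_sum: "pderiv_mp i (sum g S) = (\<Sum>x\<in>S. pderiv_mp i (g x))"
  by (simp add: pderiv_lext addfun2.lext_sum[OF pdf_addfun])

lemma pderiv_single: "pderiv_mp i (Poly_Mapping.single m c) =
   Poly_Mapping.single (m - Poly_Mapping.single i 1) (of_nat (Poly_Mapping.lookup m i) * c)"
  by (simp add: pderiv_lext addfun2.lext_single[OF pdf_addfun] pdf_def)

lemma lookup_minus_nat: "Poly_Mapping.lookup (a - b) k = Poly_Mapping.lookup a k - Poly_Mapping.lookup (b :: 'n \<Rightarrow>\<^sub>0 nat) k"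
  by (simp add: minus_poly_mapping.rep_eq)

lemma pderiv_single_mult:
  fixes a b :: "'a::comm_ring_1"
  shows "pderiv_mp i (Poly_Mapping.single m a * Poly_Mapping.single m' b) =
    pderiv_mp i (Poly_Mapping.single m a) * Poly_Mapping.single m' b +
    Poly_Mapping.single m a * pderiv_mp i (Poly_Mapping.single m' b)"
proof -
  let ?e = "Poly_Mapping.single i (1::nat)"
  have "pderiv_mp i (Poly_Mapping.single m a * Poly_Mapping.single m' b) =
     Poly_Mapping.single (m + m' - ?e) (of_nat (Poly_Mapping.lookup m i) * (a * b))
   + Poly_Mapping.single (m + m' - ?e) (of_nat (Poly_Mapping.lookup m' i) * (a * b))"
    by (simp add: mult_single pderiv_single lookup_add distrib_right single_add)
  also have "Poly_Mapping.single (m + m' - ?e) (of_nat (Poly_Mapping.lookup m i) * (a * b))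
     = pderiv_mp i (Poly_Mapping.single m a) * Poly_Mapping.single m' b"
  proof (cases "Poly_Mapping.lookup m i = 0")
    case True then show ?thesis by (simp add: pderiv_single)
  next
    case False
    then have "m + m' - ?e = m - ?e + m'"
      by (auto simp: poly_mapping_eq_iff fun_eq_iff lookup_add lookup_minus_nat lookup_single when_def)
    then show ?thesis by (simp add: pderiv_single mult_single mult.assoc)
  qed
  also have "Poly_Mapping.single (m + m' - ?e) (of_nat (Poly_Mapping.lookup m' i) * (a * b))
     = Poly_Mapping.single m a * pderiv_mp i (Poly_Mapping.single m' b)"
  proof (cases "Poly_Mapping.lookup m' i = 0")
    case True then show ?thesis by (simp add: pderiv_single)
  next
    case False
    then have "m + m' - ?e = m + (m' - ?e)"
      by (auto simp: poly_mapping_eq_iff fun_eq_iff lookup_add lookup_minus_nat lookup_single when_def)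
    then show ?thesis by (simp add: pderiv_single mult_single algebra_simps)
  qed
  finally show ?thesis .
qed

lemma pderiv_mult:
  fixes p q :: "('n, 'a::comm_ring_1) mpoly"
  shows "pderiv_mp i (p * q) = pderiv_mp i p * q + p * pderiv_mp i q"
proof -
  let ?P = "\<lambda>m. Poly_Mapping.single m (Poly_Mapping.lookup p m)"
  let ?Q = "\<lambda>m. Poly_Mapping.single m (Poly_Mapping.lookup q m)"
  have ep: "p = (\<Sum>m\<in>Poly_Mapping.keys p. ?P m)" by (rule poly_mapping_expand)
  have eq: "q = (\<Sum>m\<in>Poly_Mapping.keys q. ?Q m)" by (rule poly_mapping_expand)
  have "p * q = (\<Sum>m\<in>Poly_Mapping.keys p. \<Sum>m'\<in>Poly_Mapping.keys q. ?P m * ?Q m')"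
    by (subst (1) ep, subst (1) eq) (simp add: sum_product)
  then have "pderiv_mp i (p * q) = (\<Sum>m\<in>Poly_Mapping.keys p. \<Sum>m'\<in>Poly_Mapping.keys q.
      pderiv_mp i (?P m) * ?Q m' + ?P m * pderiv_mp i (?Q m'))"
    by (simp add: pderiv_sum pderiv_single_mult)
  also have "\<dots> = (\<Sum>m\<in>Poly_Mapping.keys p. pderiv_mp i (?P m)) * (\<Sum>m'\<in>Poly_Mapping.keys q. ?Q m')
     + (\<Sum>m\<in>Poly_Mapping.keys p. ?P m) * (\<Sum>m'\<in>Poly_Mapping.keys q. pderiv_mp i (?Q m'))"
    by (simp add: sum.distrib sum_product)
  also have "\<dots> = pderiv_mp i p * q + p * pderiv_mp i q"
    by (simp only: pderiv_sum[symmetric] ep[symmetric] eq[symmetric])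
  finally show ?thesis .
qed

lemma Const_add: "Const (a + b) = Const a + Const b"
  by (simp add: Const_def single_add)
lemma Const_mult: "Const (a * b) = Const a * (Const b :: ('n,'a::comm_ring_1) mpoly)"
  by (simp add: Const_def mult_single)
lemma Const_0[simp]: "Const 0 = 0"
  by (simp add: Const_def)
lemma Const_1[simp]: "Const 1 = 1"
  by (simp add: Const_def)
lemma Const_sum: "Const (sum g S) = (\<Sum>x\<in>S. Const (g x))"
  by (induction S rule: infinite_finite_induct) (auto simp: Const_add)
lemma Const_of_nat: "Const (of_nat n) = of_nat n"
  by (simp add: Const_def)

lemma pderiv_Const[simp]: "pderiv_mp i (Const c) = 0"
  by (simp add: Const_def pderiv_single)

lemma pderiv_Var: "pderiv_mp i (Var j) = Const (if i = j then 1 else 0)"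
  by (auto simp: Var_def Const_def pderiv_single lookup_single when_def)

definition dM :: "'a::field^'n^'n \<Rightarrow> ('n::finite, 'a) mpoly \<Rightarrow> ('n, 'a) mpoly" where
  "dM M p = (\<Sum>i\<in>UNIV. \<Sum>j\<in>UNIV. Const (M $ i $ j) * Var j * pderiv_mp i p)"

lemma lie_alg_dM: "lie_alg P = {M. dM M P = 0}"
  by (simp add: lie_alg_def dM_def)

lemma dM_mult: "dM M (p * q) = dM M p * q + p * dM M q"
  by (simp add: dM_def pderiv_mult algebra_simps sum.distrib sum_distrib_left sum_distrib_right)

lemma dM_add: "dM M (p + q) = dM M p + dM M q"
  by (simp add: dM_def pderiv_add algebra_simps sum.distrib)

lemma dM_zero[simp]: "dM M 0 = 0"
  by (simp add: dM_def pderiv_lext lext_def)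

lemma dM_sum: "dM M (sum g S) = (\<Sum>x\<in>S. dM M (g x))"
  by (induction S rule: infinite_finite_induct) (simp_all add: dM_add)

lemma dM_Const[simp]: "dM M (Const c) = 0"
  by (simp add: dM_def)

lemma dM_Const_mult: "dM M (Const c * p) = Const c * dM M p"
  by (simp add: dM_mult)

lemma dM_power: "dM M (p ^ n) = of_nat n * p ^ (n - 1) * dM M p"
proof (induction n)
  case 0 then show ?case using dM_Const[of M 1] by simp
next
  case (Suc n)
  show ?case
  proof (cases n)
    case 0 then show ?thesis by simp
  next
    case (Suc k)
    then show ?thesis using Suc.IH by (simp add: dM_mult algebra_simps)
  qed
qed

lemma dM_prod: "finite S \<Longrightarrow> dM M (prod g S) = (\<Sum>k\<in>S. dM M (g k) * prod g (S - {k}))"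
proof (induction S rule: finite_induct)
  case empty then show ?case using dM_Const[of M 1] by simp
next
  case (insert x F)
  have "dM M (prod g (insert x F)) = dM M (g x) * prod g F + g x * dM M (prod g F)"
    using insert by (simp add: dM_mult)
  also have "g x * dM M (prod g F) = (\<Sum>k\<in>F. dM M (g k) * prod g (insert x F - {k}))"
  proof -
    have "prod g (insert x F - {k}) = g x * prod g (F - {k})" if "k \<in> F" for k
    proof -
      have "insert x F - {k} = insert x (F - {k})" using that insert.hyps(2) by auto
      then show ?thesis using insert.hyps by simp
    qed
    then have "(\<Sum>k\<in>F. dM M (g k) * prod g (insert x F - {k})) = (\<Sum>k\<in>F. g x * (dM M (g k) * prod g (F - {k})))"
      by (intro sum.cong) (simp_all add: algebra_simps)
    also have "\<dots> = g x * dM M (prod g F)"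
      by (simp add: insert.IH sum_distrib_left)
    finally show ?thesis by simp
  qed
  also have "prod g F = prod g (insert x F - {x})" using insert.hyps by simp
  finally show ?case using insert.hyps by simp
qed

lemma dM_Var: "dM M (Var j) = (\<Sum>i\<in>UNIV. Const (M $ j $ i) * Var i)"
  apply (simp add: dM_def pderiv_Var if_distrib cong: if_cong)
  apply (subst sum.swap)
  apply simp
  done


definition Tm :: "('n::finite \<Rightarrow> ('n, 'a::comm_ring_1) mpoly) \<Rightarrow> ('n \<Rightarrow>\<^sub>0 nat) \<Rightarrow> ('n, 'a) mpoly" where
  "Tm \<sigma> m = (\<Prod>i\<in>UNIV. \<sigma> i ^ Poly_Mapping.lookup m i)"

definition sbf :: "('n::finite \<Rightarrow> ('n, 'a::comm_ring_1) mpoly) \<Rightarrow> ('n \<Rightarrow>\<^sub>0 nat) \<Rightarrow> 'a \<Rightarrow> ('n, 'a) mpoly" where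
  "sbf \<sigma> m c = Const c * Tm \<sigma> m"

definition subst :: "('n::finite \<Rightarrow> ('n, 'a::comm_ring_1) mpoly) \<Rightarrow> ('n, 'a) mpoly \<Rightarrow> ('n, 'a) mpoly" where
  "subst \<sigma> p = lext (sbf \<sigma>) p"

lemma sbf_addfun: "addfun2 (sbf \<sigma>)"
  by unfold_locales (simp add: sbf_def Const_add distrib_right)

lemma subst_add: "subst \<sigma> (p + q) = subst \<sigma> p + subst \<sigma> q"
  by (simp add: subst_def addfun2.lext_add[OF sbf_addfun])

lemma subst_sum: "subst \<sigma> (sum g S) = (\<Sum>x\<in>S. subst \<sigma> (g x))"
  by (simp add: subst_def addfun2.lext_sum[OF sbf_addfun])

lemma subst_single: "subst \<sigma> (Poly_Mapping.single m c) = Const c * Tm \<sigma> m"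
  by (simp add: subst_def addfun2.lext_single[OF sbf_addfun] sbf_def)

lemma Tm_add: "Tm \<sigma> (m + m') = Tm \<sigma> m * Tm \<sigma> m'"
  by (simp add: Tm_def lookup_add power_add prod.distrib)

lemma subst_single_mult:
  "subst \<sigma> (Poly_Mapping.single m a * Poly_Mapping.single m' b) =
    subst \<sigma> (Poly_Mapping.single m a) * subst \<sigma> (Poly_Mapping.single m' b)"
  by (simp add: mult_single subst_single Tm_add Const_mult algebra_simps)

lemma subst_mult:
  fixes p q :: "('n::finite, 'a::comm_ring_1) mpoly"
  shows "subst \<sigma> (p * q) = subst \<sigma> p * subst \<sigma> q"
proof -
  let ?P = "\<lambda>m. Poly_Mapping.single m (Poly_Mapping.lookup p m)"
  let ?Q = "\<lambda>m. Poly_Mapping.single m (Poly_Mapping.lookup q m)"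
  have ep: "p = (\<Sum>m\<in>Poly_Mapping.keys p. ?P m)" by (rule poly_mapping_expand)
  have eq: "q = (\<Sum>m\<in>Poly_Mapping.keys q. ?Q m)" by (rule poly_mapping_expand)
  have "p * q = (\<Sum>m\<in>Poly_Mapping.keys p. \<Sum>m'\<in>Poly_Mapping.keys q. ?P m * ?Q m')"
    by (subst (1) ep, subst (1) eq) (simp add: sum_product)
  then have "subst \<sigma> (p * q) = (\<Sum>m\<in>Poly_Mapping.keys p. \<Sum>m'\<in>Poly_Mapping.keys q.
      subst \<sigma> (?P m) * subst \<sigma> (?Q m'))"
    by (simp add: subst_sum subst_single_mult)
  also have "\<dots> = (\<Sum>m\<in>Poly_Mapping.keys p. subst \<sigma> (?P m)) * (\<Sum>m'\<in>Poly_Mapping.keys q. subst \<sigma> (?Q m'))"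
    by (simp add: sum_product)
  also have "\<dots> = subst \<sigma> p * subst \<sigma> q"
    by (simp only: subst_sum[symmetric] ep[symmetric] eq[symmetric])
  finally show ?thesis .
qed

lemma Tm_zero[simp]: "Tm \<sigma> 0 = 1"
  by (simp add: Tm_def)

lemma subst_Const[simp]: "subst \<sigma> (Const c) = Const c"
  by (simp add: Const_def subst_single)

lemma subst_one[simp]: "subst \<sigma> 1 = 1"
  using subst_Const[of \<sigma> 1] by simp

lemma subst_Var[simp]: "subst \<sigma> (Var j) = \<sigma> j"
proof -
  have "Tm \<sigma> (Poly_Mapping.single j 1) = (\<Prod>i\<in>UNIV. if i = j then \<sigma> i else 1)"
    unfolding Tm_def by (rule prod.cong) (auto simp: lookup_single when_def)
  also have "\<dots> = \<sigma> j" by (simp add: prod.delta)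
  finally show ?thesis by (simp add: Var_def subst_single)
qed

lemma subst_power: "subst \<sigma> (p ^ n) = subst \<sigma> p ^ n"
  by (induction n) (simp_all add: subst_mult)

lemma subst_prod: "subst \<sigma> (prod g S) = (\<Prod>x\<in>S. subst \<sigma> (g x))"
  by (induction S rule: infinite_finite_induct) (simp_all add: subst_mult)

lemma inv_props:
  assumes "invertible (A::'a::semiring_1^'n^'m)"
  shows "A ** matrix_inv A = mat 1" "matrix_inv A ** A = mat 1"
proof -
  have "\<exists>A'. A ** A' = mat 1 \<and> A' ** A = mat 1" using assms by (simp add: invertible_def)
  from someI_ex[OF this] show "A ** matrix_inv A = mat 1" "matrix_inv A ** A = mat 1"
    by (simp_all add: matrix_inv_def)
qed

lemma mat1_comp: "(mat 1 :: 'a::zero_neq_one^'n^'n) $ i $ j = (if i = j then 1 else 0)"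
  by (simp add: mat_def)

lemma dM_lin: "dM M (lin_subst A k) = lin_subst (A ** M) k"
proof -
  have "dM M (lin_subst A k) = (\<Sum>j\<in>UNIV. Const (A $ k $ j) * (\<Sum>i\<in>UNIV. Const (M $ j $ i) * Var i))"
    by (simp add: lin_subst_def dM_sum dM_Const_mult dM_Var)
  also have "\<dots> = (\<Sum>j\<in>UNIV. \<Sum>i\<in>UNIV. Const (A $ k $ j * M $ j $ i) * Var i)"
    by (simp add: sum_distrib_left Const_mult mult.assoc)
  also have "\<dots> = (\<Sum>i\<in>UNIV. \<Sum>j\<in>UNIV. Const (A $ k $ j * M $ j $ i) * Var i)"
    by (rule sum.swap)
  also have "\<dots> = lin_subst (A ** M) k"
    by (simp add: lin_subst_def matrix_matrix_mult_def Const_sum sum_distrib_right)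
  finally show ?thesis .
qed

lemma lin_comp: "lin_subst (B ** A) k = (\<Sum>l\<in>UNIV. Const (B $ k $ l) * lin_subst A l)"
proof -
  have "lin_subst (B ** A) k = (\<Sum>j\<in>UNIV. \<Sum>l\<in>UNIV. Const (B $ k $ l * A $ l $ j) * Var j)"
    by (simp add: lin_subst_def matrix_matrix_mult_def Const_sum sum_distrib_right)
  also have "\<dots> = (\<Sum>l\<in>UNIV. \<Sum>j\<in>UNIV. Const (B $ k $ l * A $ l $ j) * Var j)"
    by (rule sum.swap)
  also have "\<dots> = (\<Sum>l\<in>UNIV. Const (B $ k $ l) * lin_subst A l)"
    by (simp add: lin_subst_def sum_distrib_left Const_mult mult.assoc)
  finally show ?thesis .
qed

lemma subst_lin: "subst \<sigma> (lin_subst A k) = (\<Sum>j\<in>UNIV. Const (A $ k $ j) * \<sigma> j)"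
  by (simp add: lin_subst_def subst_sum subst_mult)

lemma lin_mat1: "lin_subst (mat 1 :: 'a::comm_ring_1^'n::finite^'n) k = Var k"
proof -
  have "(\<Sum>j\<in>UNIV. Const ((mat 1 :: 'a^'n^'n) $ k $ j) * Var j) = (\<Sum>j\<in>UNIV. if k = j then Var j else (0::('n,'a) mpoly))"
    by (rule sum.cong) (auto simp: mat1_comp)
  then show ?thesis by (simp add: lin_subst_def)
qed

lemma subst_lin_inv:
  assumes "A ** Ai = mat 1"
  shows "subst (lin_subst Ai) (lin_subst A k) = Var k"
proof -
  have "subst (lin_subst Ai) (lin_subst A k) = lin_subst (A ** Ai) k"
    by (simp add: subst_lin lin_comp)
  then show ?thesis using assms by (simp add: lin_mat1)
qed


lemma dM_f:
  fixes A M :: "'a::field^'n::finite^'n"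
  shows "dM M (\<Prod>k\<in>UNIV. lin_subst A k ^ \<alpha> k) =
    (\<Sum>k\<in>UNIV. of_nat (\<alpha> k) * lin_subst A k ^ (\<alpha> k - 1) * lin_subst (A ** M) k *
        (\<Prod>k'\<in>UNIV - {k}. lin_subst A k' ^ \<alpha> k'))"
  by (simp add: dM_prod dM_power dM_lin)

lemma Var_power: "Var k ^ n = (Poly_Mapping.single (Poly_Mapping.single k n) 1 :: ('n, 'a::comm_ring_1) mpoly)"
  by (induction n) (simp_all add: Var_def mult_single single_add[symmetric] add.commute)

lemma prod_single: "(\<Prod>x\<in>S. Poly_Mapping.single (g x) (1::'a::comm_ring_1)) = Poly_Mapping.single (sum g S) 1"
  by (induction S rule: infinite_finite_induct) (simp_all add: mult_single)

lemma Const_single: "Const c * Poly_Mapping.single e 1 = Poly_Mapping.single e c"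
  by (simp add: Const_def mult_single)

lemma lookup_single_nat: "Poly_Mapping.lookup (Poly_Mapping.single k (n::nat)) i = (if i = k then n else 0)"
  by (simp add: lookup_single when_def)

definition Eexp :: "('n::finite \<Rightarrow> nat) \<Rightarrow> 'n \<Rightarrow> 'n \<Rightarrow> ('n \<Rightarrow>\<^sub>0 nat)" where
  "Eexp \<alpha> k l = Poly_Mapping.single k (\<alpha> k - 1) + Poly_Mapping.single l 1 + (\<Sum>k'\<in>UNIV - {k}. Poly_Mapping.single k' (\<alpha> k'))"

lemma lookup_Eexp:
  assumes "\<forall>i. \<alpha> i \<ge> 1"
  shows "Poly_Mapping.lookup (Eexp \<alpha> k l) i = \<alpha> i + (if i = l then 1 else 0) - (if i = k then 1 else 0)"
proof -
  have "Poly_Mapping.lookup (\<Sum>k'\<in>UNIV - {k}. Poly_Mapping.single k' (\<alpha> k')) i = (if i = k then 0 else \<alpha> i)"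
    by (simp add: lookup_sum lookup_single_nat)
  then show ?thesis using assms[rule_format, of i]
    by (cases "i = k"; cases "i = l") (auto simp: Eexp_def lookup_add lookup_single_nat)
qed

lemma Eexp_eq:
  assumes "\<forall>i. \<alpha> i \<ge> 1"
  shows "Eexp \<alpha> k l = Eexp \<alpha> k' l' \<longleftrightarrow> (k = l \<and> k' = l') \<or> (k = k' \<and> l = l')"
proof
  assume "Eexp \<alpha> k l = Eexp \<alpha> k' l'"
  then have h: "\<And>i. Poly_Mapping.lookup (Eexp \<alpha> k l) i = Poly_Mapping.lookup (Eexp \<alpha> k' l') i" by simp
  have a: "\<And>i. \<alpha> i \<ge> 1" using assms by simp
  note h' = h[unfolded lookup_Eexp[OF assms]]
  show "(k = l \<and> k' = l') \<or> (k = k' \<and> l = l')"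
  proof (cases "k = l")
    case True
    have "k' = l'"
    proof (rule ccontr)
      assume "k' \<noteq> l'"
      then show False using h'[of k'] a[of k'] True by (cases "k' = k") auto
    qed
    then show ?thesis using True by simp
  next
    case False
    have 1: "k = k'"
    proof (rule ccontr)
      assume "k \<noteq> k'"
      then show False using h'[of k] a[of k] False by (cases "k = l'") auto
    qed
    have "l = l'"
    proof (rule ccontr)
      assume "l \<noteq> l'"
      then show False using h'[of l] a[of l] False 1 by auto
    qed
    then show ?thesis using 1 by simp
  qed
next
  assume "(k = l \<and> k' = l') \<or> (k = k' \<and> l = l')"
  then show "Eexp \<alpha> k l = Eexp \<alpha> k' l'"
    by (auto simp: poly_mapping_eq_iff fun_eq_iff lookup_Eexp[OF assms])
qed

lemma lie_char:
  fixes \<alpha> :: "'n::finite \<Rightarrow> nat" and A M :: "'a::field_char_0^'n^'n"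
  assumes alpha: "\<forall>i. \<alpha> i \<ge> 1" and inv: "invertible A"
  defines "B \<equiv> A ** M ** matrix_inv A"
  shows "M \<in> lie_alg (\<Prod>k\<in>UNIV. lin_subst A k ^ \<alpha> k) \<longleftrightarrow>
     (\<forall>k l. k \<noteq> l \<longrightarrow> B $ k $ l = 0) \<and> (\<Sum>k\<in>UNIV. of_nat (\<alpha> k) * B $ k $ k) = 0"
proof -
  let ?l = "lin_subst A"
  let ?f = "\<Prod>k\<in>UNIV. lin_subst A k ^ \<alpha> k"
  let ?R = "\<lambda>k. \<Prod>k'\<in>UNIV - {k}. ?l k' ^ \<alpha> k'"
  define c where "c k l = of_nat (\<alpha> k) * B $ k $ l" for k l
  have AM: "A ** M = B ** A"
    by (simp add: B_def matrix_mul_assoc[symmetric] inv_props(2)[OF inv])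
  have lin: "lin_subst (A ** M) k = (\<Sum>l\<in>UNIV. Const (B $ k $ l) * ?l l)" for k
    by (simp add: AM lin_comp)
  have df: "dM M ?f = (\<Sum>k\<in>UNIV. \<Sum>l\<in>UNIV. Const (c k l) * (?l k ^ (\<alpha> k - 1) * ?l l * ?R k))"
    unfolding dM_f lin c_def
    by (simp add: Const_mult Const_of_nat sum_distrib_left sum_distrib_right mult_ac)
  show ?thesis
  proof
    assume "M \<in> lie_alg ?f"
    then have d0: "dM M ?f = 0" by (simp add: lie_alg_dM)
    define \<sigma> where "\<sigma> = lin_subst (matrix_inv A)"
    have sub: "subst \<sigma> (?l k) = Var k" for k
      unfolding \<sigma>_def by (rule subst_lin_inv) (rule inv_props(1)[OF inv])
    have mono: "Var k ^ (\<alpha> k - Suc 0) * Var l * (\<Prod>k'\<in>UNIV - {k}. Var k' ^ \<alpha> k') =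
        (Poly_Mapping.single (Eexp \<alpha> k l) 1 :: ('n, 'a) mpoly)" for k l
      by (simp add: Var_power prod_single Eexp_def mult_single) (simp add: Var_def mult_single)
    have "subst \<sigma> (dM M ?f) = (\<Sum>k\<in>UNIV. \<Sum>l\<in>UNIV. Poly_Mapping.single (Eexp \<alpha> k l) (c k l))"
      unfolding df by (simp add: subst_sum subst_mult subst_power subst_prod sub mono Const_single)
    then have z: "(\<Sum>k\<in>UNIV. \<Sum>l\<in>UNIV. Poly_Mapping.single (Eexp \<alpha> k l) (c k l)) = 0"
      using d0 by (simp add: subst_def lext_def)
    have coef: "(\<Sum>k\<in>UNIV. \<Sum>l\<in>UNIV. if Eexp \<alpha> k l = Eexp \<alpha> k0 l0 then c k l else 0) = 0" for k0 l0
    proof -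
      have "Poly_Mapping.lookup (\<Sum>k\<in>UNIV. \<Sum>l\<in>UNIV. Poly_Mapping.single (Eexp \<alpha> k l) (c k l)) (Eexp \<alpha> k0 l0) = 0"
        using z by simp
      then show ?thesis by (simp add: lookup_sum lookup_single when_def)
    qed
    have off: "B $ k0 $ l0 = 0" if "k0 \<noteq> l0" for k0 l0
    proof -
      have "(\<Sum>k\<in>UNIV. \<Sum>l\<in>UNIV. if Eexp \<alpha> k l = Eexp \<alpha> k0 l0 then c k l else 0)
          = (\<Sum>k\<in>UNIV. if k = k0 then (\<Sum>l\<in>UNIV. if l = l0 then c k l else 0) else 0)"
        using that by (intro sum.cong refl) (auto simp: Eexp_eq[OF alpha] intro!: sum.neutral)
      also have "\<dots> = c k0 l0" by simp
      finally have "c k0 l0 = 0" using coef[of k0 l0] by simp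
      then show ?thesis using alpha[rule_format, of k0] by (simp add: c_def)
    qed
    obtain k0 :: 'n where True by simp
    have "(\<Sum>k\<in>UNIV. \<Sum>l\<in>UNIV. if Eexp \<alpha> k l = Eexp \<alpha> k0 k0 then c k l else 0)
        = (\<Sum>k\<in>UNIV. \<Sum>l\<in>UNIV. if l = k then c k l else 0)"
      by (intro sum.cong refl) (auto simp: Eexp_eq[OF alpha])
    also have "\<dots> = (\<Sum>k\<in>UNIV. c k k)" by simp
    finally have "(\<Sum>k\<in>UNIV. c k k) = 0" using coef[of k0 k0] by simp
    then show "(\<forall>k l. k \<noteq> l \<longrightarrow> B $ k $ l = 0) \<and> (\<Sum>k\<in>UNIV. of_nat (\<alpha> k) * B $ k $ k) = 0"
      using off by (simp add: c_def)
  next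
    assume h: "(\<forall>k l. k \<noteq> l \<longrightarrow> B $ k $ l = 0) \<and> (\<Sum>k\<in>UNIV. of_nat (\<alpha> k) * B $ k $ k) = 0"
    have trm: "(\<Sum>l\<in>UNIV. Const (c k l) * (?l k ^ (\<alpha> k - 1) * ?l l * ?R k)) = Const (c k k) * ?f" for k
    proof -
      have "(\<Sum>l\<in>UNIV. Const (c k l) * (?l k ^ (\<alpha> k - 1) * ?l l * ?R k))
         = (\<Sum>l\<in>UNIV. if l = k then Const (c k k) * (?l k ^ (\<alpha> k - 1) * ?l k * ?R k) else 0)"
        using h by (intro sum.cong refl) (auto simp: c_def)
      also have "\<dots> = Const (c k k) * (?l k ^ (\<alpha> k - 1) * ?l k * ?R k)" by simp
      also have "?l k ^ (\<alpha> k - 1) * ?l k = ?l k ^ \<alpha> k"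
        using alpha[rule_format, of k] by (intro power_minus_mult) simp
      also have "?l k ^ \<alpha> k * ?R k = ?f"
        by (rule prod.remove[symmetric]) auto
      finally show ?thesis .
    qed
    have "dM M ?f = (\<Sum>k\<in>UNIV. Const (c k k) * ?f)"
      unfolding df trm by simp
    also have "\<dots> = Const (\<Sum>k\<in>UNIV. c k k) * ?f"
      by (simp add: Const_sum sum_distrib_right)
    also have "\<dots> = 0" using h by (simp add: c_def)
    finally show "M \<in> lie_alg ?f" by (simp add: lie_alg_dM)
  qed
qed


lemma mm_entry: "(X ** Y) $ i $ j = (\<Sum>k\<in>UNIV. X $ i $ k * Y $ k $ j)"
  by (simp add: matrix_matrix_mult_def)

lemma diag_entry: "diag_mat v $ i $ j = (if i = j then v i else 0)"
  by (simp add: diag_mat_def)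

lemma diag_mult_left: "(diag_mat v ** (X::'a::field^'n::finite^'n)) $ i $ j = v i * X $ i $ j"
  by (simp add: mm_entry diag_entry if_distrib if_distribR cong: if_cong)

lemma diag_mult_right: "((X::'a::field^'n::finite^'n) ** diag_mat v) $ i $ j = X $ i $ j * v j"
  by (simp add: mm_entry diag_entry if_distrib if_distribR cong: if_cong)

lemma diag_diag: "diag_mat v ** diag_mat w = (diag_mat (\<lambda>i. v i * w i) :: 'a::field^'n::finite^'n)"
  by (simp add: vec_eq_iff diag_mult_left diag_entry)

lemma diag_comm: "diag_mat v ** diag_mat w = (diag_mat w ** diag_mat v :: 'a::field^'n::finite^'n)"
  by (simp add: diag_diag mult.commute)

definition isdiag :: "'a::field^'n::finite^'n \<Rightarrow> bool" where
  "isdiag X \<longleftrightarrow> (\<forall>k l. k \<noteq> l \<longrightarrow> X $ k $ l = 0)"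

lemma isdiag_eq: "isdiag X \<Longrightarrow> X = diag_mat (\<lambda>i. X $ i $ i)"
  by (auto simp: isdiag_def vec_eq_iff diag_entry)

lemma isdiag_diag[simp]: "isdiag (diag_mat v)"
  by (simp add: isdiag_def diag_entry)

lemma trace_diag: "trace (diag_mat v) = sum v UNIV"
  by (simp add: trace_def diag_entry)

lemma matrix_add_rdistrib: "((B + C) ** (A::'a::field^'n::finite^'n)) = (B ** A) + (C ** A)"
  by (simp add: vec_eq_iff mm_entry distrib_right sum.distrib)

lemma matrix_diff_ldistrib: "((A::'a::field^'n::finite^'n) ** (B - C)) = (A ** B) - (A ** C)"
  by (simp add: vec_eq_iff mm_entry algebra_simps sum_subtractf)

lemma matrix_diff_rdistrib: "((B - C) ** (A::'a::field^'n::finite^'n)) = (B ** A) - (C ** A)"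
  by (simp add: vec_eq_iff mm_entry algebra_simps sum_subtractf)

lemma mscale_entry: "mscale c X $ i $ j = c * X $ i $ j"
  by (simp add: mscale_def)

lemma mscale_mult_left: "mscale c X ** (Y::'a::field^'n::finite^'n) = mscale c (X ** Y)"
  by (simp add: vec_eq_iff mm_entry mscale_entry sum_distrib_left mult.assoc)

lemma mscale_mult_right: "(X::'a::field^'n::finite^'n) ** mscale c Y = mscale c (X ** Y)"
  by (simp add: vec_eq_iff mm_entry mscale_entry sum_distrib_left algebra_simps)

lemma mscale_diag: "mscale c (diag_mat v) = diag_mat (\<lambda>i. c * v i)"
  by (simp add: vec_eq_iff mscale_entry diag_entry)

lemma add_diag: "diag_mat v + diag_mat w = diag_mat (\<lambda>i. v i + w i)"
  by (simp add: vec_eq_iff diag_entry)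

lemma diff_diag: "diag_mat v - diag_mat w = (diag_mat (\<lambda>i. v i - w i) :: 'a::field^'n::finite^'n)"
  by (simp add: vec_eq_iff diag_entry)

lemma diag_zero_iff: "diag_mat v = (0::'a::field^'n::finite^'n) \<longleftrightarrow> (\<forall>i. v i = 0)"
  by (auto simp: vec_eq_iff diag_entry)

lemma diag_inj: "diag_mat v = (diag_mat w::'a::field^'n::finite^'n) \<longleftrightarrow> v = w"
  by (auto simp: vec_eq_iff diag_entry fun_eq_iff)

lemma trace_diag_diag: "trace (diag_mat v ** diag_mat w) = (\<Sum>i\<in>UNIV. v i * (w i :: 'a::field))"
  by (simp add: diag_diag trace_diag)

locale conjA =
  fixes A Ai :: "'a::field^'n::finite^'n"
  assumes r: "A ** Ai = mat 1" and l: "Ai ** A = mat 1"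
begin

definition cj :: "'a^'n^'n \<Rightarrow> 'a^'n^'n" where "cj X = A ** X ** Ai"
definition uc :: "'a^'n^'n \<Rightarrow> 'a^'n^'n" where "uc X = Ai ** X ** A"

lemma cj_uc[simp]: "cj (uc X) = X"
  by (simp add: cj_def uc_def matrix_mul_assoc r)
     (simp add: matrix_mul_assoc[symmetric] r)

lemma uc_cj[simp]: "uc (cj X) = X"
  by (simp add: cj_def uc_def matrix_mul_assoc l)
     (simp add: matrix_mul_assoc[symmetric] l)

lemma cj_mult: "cj (X ** Y) = cj X ** cj Y"
proof -
  have "cj X ** cj Y = A ** X ** (Ai ** A) ** Y ** Ai"
    by (simp add: cj_def matrix_mul_assoc)
  then show ?thesis by (simp add: l cj_def matrix_mul_assoc)
qed

lemma cj_add: "cj (X + Y) = cj X + cj Y"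
  by (simp add: cj_def matrix_add_ldistrib matrix_add_rdistrib)
lemma cj_diff: "cj (X - Y) = cj X - cj Y"
  by (simp add: cj_def matrix_diff_ldistrib matrix_diff_rdistrib)
lemma cj_scale: "cj (mscale c X) = mscale c (cj X)"
  by (simp add: cj_def mscale_mult_left mscale_mult_right)
lemma cj_zero[simp]: "cj 0 = 0"
  by (simp add: cj_def)
lemma uc_add: "uc (X + Y) = uc X + uc Y"
  by (simp add: uc_def matrix_add_ldistrib matrix_add_rdistrib)
lemma uc_scale: "uc (mscale c X) = mscale c (uc X)"
  by (simp add: uc_def mscale_mult_left mscale_mult_right)
lemma uc_zero[simp]: "uc 0 = 0"
  by (simp add: uc_def)

lemma cj_inj: "cj X = cj Y \<longleftrightarrow> X = Y"
  by (metis uc_cj)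

lemma trace_cj: "trace (cj X) = trace X"
proof -
  have "trace (cj X) = trace ((A ** X) ** Ai)" by (simp add: cj_def)
  also have "\<dots> = trace (Ai ** (A ** X))" by (rule trace_mul_sym)
  also have "\<dots> = trace X" by (simp add: matrix_mul_assoc l)
  finally show ?thesis .
qed

end


locale msetup =
  fixes A :: "'a::field_char_0^'n::finite^'n" and \<alpha> :: "'n \<Rightarrow> nat"
  assumes alpha: "\<forall>i. \<alpha> i \<ge> 1" and inv: "invertible A"
begin

sublocale conjA A "matrix_inv A" using inv_props[OF inv] by unfold_locales

definition wt :: "'a^'n^'n \<Rightarrow> 'a" where "wt X = (\<Sum>k\<in>UNIV. of_nat (\<alpha> k) * X $ k $ k)"

abbreviation "g \<equiv> lie_alg (\<Prod>k\<in>UNIV. lin_subst A k ^ \<alpha> k)"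

lemma g_char: "M \<in> g \<longleftrightarrow> isdiag (cj M) \<and> wt (cj M) = 0"
  using lie_char[OF alpha inv, of M] by (simp add: cj_def isdiag_def wt_def)

lemma alpha_nz: "(of_nat (\<alpha> k) :: 'a) \<noteq> 0"
  using alpha[rule_format, of k] by simp

lemma cent_char: "C \<in> centralizer g \<longleftrightarrow> isdiag (cj C)"
proof
  assume C: "C \<in> centralizer g"
  let ?E = "cj C"
  show "isdiag ?E"
    unfolding isdiag_def
  proof (intro allI impI)
    fix k l :: 'n assume kl: "k \<noteq> l"
    define D :: "'a^'n^'n" where "D = diag_mat (\<lambda>i. if i = k then of_nat (\<alpha> l) else if i = l then - of_nat (\<alpha> k) else 0)"
    have wD: "wt D = 0"
    proof -
      have "wt D = (\<Sum>i\<in>UNIV. (if i = k then of_nat (\<alpha> k) * of_nat (\<alpha> l) else 0)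
                 + (if i = l then - (of_nat (\<alpha> l) * of_nat (\<alpha> k)) else 0))"
        unfolding wt_def D_def diag_entry using kl by (intro sum.cong refl) auto
      also have "\<dots> = 0" by (simp add: sum.distrib)
      finally show ?thesis .
    qed
    have "uc D \<in> g" using wD by (simp add: g_char D_def)
    then have "C ** uc D = uc D ** C" using C by (simp add: centralizer_def)
    then have "cj (C ** uc D) = cj (uc D ** C)" by simp
    then have "?E ** D = D ** ?E" by (simp add: cj_mult)
    then have "(?E ** D) $ k $ l = (D ** ?E) $ k $ l" by simp
    then have "?E $ k $ l * (- of_nat (\<alpha> k)) = of_nat (\<alpha> l) * ?E $ k $ l"
      using kl by (simp add: D_def diag_mult_left diag_mult_right)
    then have "(of_nat (\<alpha> k + \<alpha> l) :: 'a) * ?E $ k $ l = 0"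
      by (simp add: algebra_simps) (metis add.commute add_eq_0_iff)
    moreover have "(of_nat (\<alpha> k + \<alpha> l) :: 'a) \<noteq> 0"
      using alpha[rule_format, of k] by (simp del: of_nat_add)
    ultimately show "?E $ k $ l = 0" by simp
  qed
next
  assume E: "isdiag (cj C)"
  show "C \<in> centralizer g"
    unfolding centralizer_def
  proof (intro CollectI ballI)
    fix M assume "M \<in> g"
    then have B: "isdiag (cj M)" by (simp add: g_char)
    have "cj (C ** M) = cj (M ** C)"
      using isdiag_eq[OF E] isdiag_eq[OF B] by (metis cj_mult diag_comm)
    then show "C ** M = M ** C" by (simp add: cj_inj)
  qed
qed

definition av :: "'n \<Rightarrow> 'a" where "av i = of_nat (\<alpha> i)"
definition H0 :: "'a^'n^'n" where "H0 = uc (diag_mat av)"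

lemma cj_H0: "cj H0 = diag_mat av"
  by (simp add: H0_def)

lemma H0_cent: "H0 \<in> centralizer g"
  by (simp add: cent_char cj_H0)

lemma trace_H0: "trace H0 = of_nat (\<Sum>i\<in>UNIV. \<alpha> i)"
proof -
  have "trace H0 = trace (cj H0)" by (rule trace_cj[symmetric])
  then show ?thesis by (simp add: cj_H0 trace_diag av_def)
qed

lemma trace_H0_M: "M \<in> g \<Longrightarrow> trace (H0 ** M) = 0"
proof -
  assume "M \<in> g"
  then have B: "isdiag (cj M)" "wt (cj M) = 0" by (simp_all add: g_char)
  have "trace (H0 ** M) = trace (cj (H0 ** M))" by (simp add: trace_cj)
  also have "\<dots> = trace (diag_mat av ** diag_mat (\<lambda>i. cj M $ i $ i))"
    by (simp add: cj_mult cj_H0 isdiag_eq[OF B(1), symmetric])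
  also have "\<dots> = wt (cj M)" by (simp add: trace_diag_diag wt_def av_def)
  finally show ?thesis using B(2) by simp
qed

lemma sum_two:
  fixes w :: "'n \<Rightarrow> 'a"
  assumes "k \<noteq> l"
  shows "(\<Sum>i\<in>UNIV. w i * (if i = k then a else if i = l then b else 0)) = w k * a + w l * b"
proof -
  have "(\<Sum>i\<in>UNIV. w i * (if i = k then a else if i = l then b else 0)) =
     (\<Sum>i\<in>UNIV. (if i = k then w k * a else 0) + (if i = l then w l * b else 0))"
    using assms by (intro sum.cong refl) auto
  also have "\<dots> = w k * a + w l * b" by (simp add: sum.distrib)
  finally show ?thesis .
qed

lemma Dkl_in_g:
  assumes "k \<noteq> l"
  shows "uc (diag_mat (\<lambda>i. if i = k then av l else if i = l then - av k else 0)) \<in> g"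
proof -
  have "wt (diag_mat (\<lambda>i. if i = k then av l else if i = l then - av k else 0)) = 0"
    unfolding wt_def diag_entry using sum_two[OF assms, of "\<lambda>i. of_nat (\<alpha> i)" "av l" "- av k"]
    by (simp add: av_def)
  then show ?thesis by (simp add: g_char)
qed

lemma sum_alpha_pos: "(of_nat (\<Sum>i\<in>UNIV. \<alpha> i) :: 'a) \<noteq> 0"
proof -
  obtain k0 :: 'n where True by simp
  have "\<alpha> k0 \<le> (\<Sum>i\<in>UNIV. \<alpha> i)" by (rule member_le_sum) auto
  then have "(\<Sum>i\<in>UNIV. \<alpha> i) \<noteq> 0" using alpha[rule_format, of k0] by linarith
  then show ?thesis by (metis of_nat_eq_0_iff)
qed

lemma H_unique:
  assumes H: "H \<in> centralizer g" "trace H = of_nat (\<Sum>i\<in>UNIV. \<alpha> i)" "\<forall>M\<in>g. trace (H ** M) = 0"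
  shows "H = H0"
proof -
  have Ed: "isdiag (cj H)" using H(1) by (simp add: cent_char)
  define e where "e = (\<lambda>i. cj H $ i $ i)"
  have E: "cj H = diag_mat e" using isdiag_eq[OF Ed] by (simp add: e_def)
  have tr: "sum e UNIV = of_nat (\<Sum>i\<in>UNIV. \<alpha> i)"
  proof -
    have "trace H = trace (cj H)" by (rule trace_cj[symmetric])
    then show ?thesis using H(2) by (simp add: E trace_diag)
  qed
  have rel: "e k * av l = e l * av k" for k l
  proof (cases "k = l")
    case True then show ?thesis by simp
  next
    case False
    let ?D = "diag_mat (\<lambda>i. if i = k then av l else if i = l then - av k else 0)"
    have "0 = trace (H ** uc ?D)" using H(3) Dkl_in_g[OF False] by simp
    also have "\<dots> = trace (cj (H ** uc ?D))" by (simp add: trace_cj)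
    also have "\<dots> = trace (diag_mat e ** ?D)" by (simp add: cj_mult E)
    also have "\<dots> = e k * av l - e l * av k"
      unfolding trace_diag_diag using sum_two[OF False, of e "av l" "- av k"] by simp
    finally show ?thesis by simp
  qed
  obtain k0 :: 'n where True by simp
  define lam where "lam = e k0 / av k0"
  have avnz: "av k \<noteq> 0" for k unfolding av_def by (rule alpha_nz)
  have ek: "e k = lam * av k" for k
  proof -
    have "e k = e k0 * av k / av k0" using rel[of k k0] avnz[of k0] by (simp add: eq_divide_eq)
    then show ?thesis by (simp add: lam_def)
  qed
  have "sum e UNIV = lam * of_nat (\<Sum>i\<in>UNIV. \<alpha> i)"
    by (simp add: ek sum_distrib_left av_def)
  then have "lam = 1" using tr sum_alpha_pos by simp
  then have "e = av" using ek by (simp add: fun_eq_iff)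
  then have "cj H = cj H0" by (simp add: E cj_H0)
  then show ?thesis by (simp add: cj_inj)
qed

lemma wt_diag: "wt (diag_mat v) = (\<Sum>i\<in>UNIV. av i * v i)"
  by (simp add: wt_def diag_entry av_def)

lemma sum_av_sq: "(\<Sum>i\<in>UNIV. av i * av i) \<noteq> 0"
proof -
  have "(\<Sum>i\<in>UNIV. av i * av i) = of_nat (\<Sum>i\<in>UNIV. \<alpha> i * \<alpha> i)" by (simp add: av_def)
  moreover obtain k0 :: 'n where True by simp
  moreover have "\<alpha> k0 * \<alpha> k0 \<le> (\<Sum>i\<in>UNIV. \<alpha> i * \<alpha> i)" by (rule member_le_sum) auto
  moreover have "\<alpha> k0 * \<alpha> k0 \<ge> 1" using alpha[rule_format, of k0] by simp
  ultimately show ?thesis by (metis le_trans not_one_le_zero of_nat_eq_0_iff)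
qed

lemma cent_decomp: "centralizer g = {M + mscale c H0 | M c. M \<in> g}"
proof (intro set_eqI iffI)
  fix C assume "C \<in> centralizer g"
  then have Ed: "isdiag (cj C)" by (simp add: cent_char)
  define e where "e = (\<lambda>i. cj C $ i $ i)"
  have E: "cj C = diag_mat e" using isdiag_eq[OF Ed] by (simp add: e_def)
  define c where "c = (\<Sum>i\<in>UNIV. av i * e i) / (\<Sum>i\<in>UNIV. av i * av i)"
  define M where "M = C - mscale c H0"
  have cjM: "cj M = diag_mat (\<lambda>i. e i - c * av i)"
    by (simp add: M_def cj_diff cj_scale E cj_H0 mscale_diag diff_diag)
  have "wt (cj M) = (\<Sum>i\<in>UNIV. av i * e i) - c * (\<Sum>i\<in>UNIV. av i * av i)"
    by (simp add: cjM wt_diag algebra_simps sum_subtractf sum_distrib_left)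
  also have "\<dots> = 0" using sum_av_sq by (simp add: c_def)
  finally have "M \<in> g" by (simp add: g_char cjM)
  moreover have "C = M + mscale c H0" by (simp add: M_def)
  ultimately show "C \<in> {M + mscale c H0 | M c. M \<in> g}" by blast
next
  fix C assume "C \<in> {M + mscale c H0 | M c. M \<in> g}"
  then obtain M c where C: "C = M + mscale c H0" and M: "M \<in> g" by blast
  have "isdiag (cj M)" using M by (simp add: g_char)
  then have dM: "cj M = diag_mat (\<lambda>i. cj M $ i $ i)" by (rule isdiag_eq)
  have "cj C = cj M + diag_mat (\<lambda>i. c * av i)"
    by (simp add: C cj_add cj_scale cj_H0 mscale_diag)
  also have "\<dots> = diag_mat (\<lambda>i. cj M $ i $ i + c * av i)"
    by (subst (1) dM) (simp add: add_diag)
  finally have "cj C = diag_mat (\<lambda>i. cj M $ i $ i + c * av i)" .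
  then show "C \<in> centralizer g" by (simp add: cent_char)
qed

lemma inter_span: "g \<inter> mat.span {H0} = {0}"
proof (intro set_eqI iffI)
  fix X assume "X \<in> g \<inter> mat.span {H0}"
  then obtain c where X: "X = mscale c H0" and g: "X \<in> g" by (auto simp: mat.span_singleton)
  have "cj X = diag_mat (\<lambda>i. c * av i)" by (simp add: X cj_scale cj_H0 mscale_diag)
  then have "c * (\<Sum>i\<in>UNIV. av i * av i) = 0"
    using g by (simp add: g_char wt_diag sum_distrib_left mult_ac)
  then have "c = 0" using sum_av_sq by simp
  then show "X \<in> {0}" by (simp add: X vec_eq_iff mscale_entry)
next
  fix X assume "X \<in> {0::'a^'n^'n}"
  then show "X \<in> g \<inter> mat.span {H0}"
    by (simp add: g_char mat.span_zero isdiag_def wt_def)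
qed

lemma uc_sum: "uc (sum F S) = (\<Sum>x\<in>S. uc (F x))"
  by (induction S rule: infinite_finite_induct) (simp_all add: uc_add)

definition Eb :: "'n \<Rightarrow> 'a^'n^'n" where "Eb k = uc (diag_mat (\<lambda>i. if i = k then 1 else 0))"

lemma lincomb: "(\<Sum>k\<in>UNIV. mscale (c k) (Eb k)) = uc (diag_mat c)"
proof -
  have "(\<Sum>k\<in>UNIV. mscale (c k) (Eb k)) = uc (\<Sum>k\<in>UNIV. mscale (c k) (diag_mat (\<lambda>i. if i = k then 1 else 0)))"
    by (simp add: Eb_def uc_sum uc_scale)
  also have "(\<Sum>k\<in>UNIV. mscale (c k) (diag_mat (\<lambda>i. if i = k then 1 else 0))) = diag_mat c"
  proof -
    have "(\<Sum>k\<in>UNIV. mscale (c k) (diag_mat (\<lambda>i. if i = k then 1 else 0))) $ i $ j = diag_mat c $ i $ j" for i j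
    proof -
      have "(\<Sum>k\<in>UNIV. mscale (c k) (diag_mat (\<lambda>i. if i = k then 1 else 0))) $ i $ j
          = (\<Sum>k\<in>UNIV. c k * (diag_mat (\<lambda>i. if i = k then 1 else 0)) $ i $ j)"
        by (simp only: sum_component mscale_entry)
      also have "\<dots> = (\<Sum>k\<in>UNIV. if k = i then (if i = j then c k else 0) else 0)"
        by (intro sum.cong refl) (simp add: diag_entry)
      also have "\<dots> = diag_mat c $ i $ j" by (simp add: diag_entry)
      finally show ?thesis .
    qed
    then show ?thesis by (simp add: vec_eq_iff)
  qed
  finally show ?thesis .
qed

lemma Eb_inj: "inj Eb"
proof
  fix k k' assume "Eb k = Eb k'"
  then have "cj (Eb k) = cj (Eb k')" by simp
  then have "(\<lambda>i. if i = k then 1 else 0) = (\<lambda>i. if i = k' then (1::'a) else 0)"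
    by (simp add: Eb_def diag_inj)
  then show "k = k'" by (metis one_neq_zero)
qed

lemma dim_cent: "mat.dim (centralizer g) = CARD('n)"
proof (rule mat.dim_unique[of "range Eb"])
  show "range Eb \<subseteq> centralizer g"
    by (auto simp: cent_char Eb_def)
  show "centralizer g \<subseteq> mat.span (range Eb)"
  proof
    fix C assume "C \<in> centralizer g"
    then have "isdiag (cj C)" by (simp add: cent_char)
    then have "C = uc (diag_mat (\<lambda>i. cj C $ i $ i))"
      by (metis isdiag_eq uc_cj)
    also have "\<dots> = (\<Sum>k\<in>UNIV. mscale (cj C $ k $ k) (Eb k))" by (simp add: lincomb)
    also have "\<dots> \<in> mat.span (range Eb)"
      by (intro mat.span_sum mat.span_scale mat.span_base) auto
    finally show "C \<in> mat.span (range Eb)" .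
  qed
  have fin: "finite (range Eb)" by simp
  show "mat.independent (range Eb)"
    unfolding mat.dependent_finite[OF fin]
  proof (intro notI, elim exE conjE)
    fix u assume nz: "\<exists>v\<in>range Eb. u v \<noteq> 0" and u: "(\<Sum>v\<in>range Eb. mscale (u v) v) = 0"
    have "(\<Sum>v\<in>range Eb. mscale (u v) v) = (\<Sum>k\<in>UNIV. mscale (u (Eb k)) (Eb k))"
      by (simp add: sum.reindex[OF Eb_inj])
    also have "\<dots> = uc (diag_mat (\<lambda>k. u (Eb k)))" by (rule lincomb)
    finally have "uc (diag_mat (\<lambda>k. u (Eb k))) = 0" using u by simp
    then have "cj (uc (diag_mat (\<lambda>k. u (Eb k)))) = 0" by simp
    then have "diag_mat (\<lambda>k. u (Eb k)) = 0" by simp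
    then show False using nz by (simp add: diag_zero_iff)
  qed
  show "card (range Eb) = CARD('n)"
    by (simp add: card_image[OF Eb_inj])
qed

end


lemma minv_minv:
  assumes "invertible (A::'a::field^'n::finite^'n)"
  shows "matrix_inv (matrix_inv A) = A"
proof -
  note i = inv_props[OF assms]
  show ?thesis unfolding matrix_inv_def[of "matrix_inv A"]
  proof (rule some_equality)
    show "matrix_inv A ** A = mat 1 \<and> A ** matrix_inv A = mat 1" using i by simp
    fix X assume X: "matrix_inv A ** X = mat 1 \<and> X ** matrix_inv A = mat 1"
    have "X = (A ** matrix_inv A) ** X" using i by simp
    also have "\<dots> = A ** (matrix_inv A ** X)" by (simp add: matrix_mul_assoc)
    also have "\<dots> = A" using X by simp
    finally show "X = A" .
  qed
qed

lemma invertible_minv: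
  assumes "invertible (A::'a::field^'n::finite^'n)"
  shows "invertible (matrix_inv A)"
  using inv_props[OF assms] unfolding invertible_def by blast

theorem proposition6:
  fixes \<alpha> :: "'n::finite \<Rightarrow> nat"
    and A :: "'a::field_char_0^'n^'n"
    and f :: "('n, 'a) mpoly"
  assumes alpha_pos: "\<forall>i. \<alpha> i \<ge> 1"
    and d_def: "d = (\<Sum>i\<in>UNIV. \<alpha> i)"
    and A_inv: "invertible A"
    and f_def: "f = (\<Prod>i\<in>UNIV. lin_subst A i ^ \<alpha> i)"
  shows "mat.dim (centralizer (lie_alg f)) = CARD('n)
    \<and> (\<exists>!H. H \<in> centralizer (lie_alg f) \<and> trace H = of_nat d
              \<and> (\<forall>M\<in>lie_alg f. trace (H ** M) = 0))
    \<and> (\<forall>H. H \<in> centralizer (lie_alg f) \<and> trace H = of_nat d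
              \<and> (\<forall>M\<in>lie_alg f. trace (H ** M) = 0)
          \<longrightarrow> (\<exists>P. invertible P \<and> H = P ** diag_mat (\<lambda>i. of_nat (\<alpha> i)) ** matrix_inv P)
              \<and> centralizer (lie_alg f) = {M + mscale c H | M c. M \<in> lie_alg f}
              \<and> lie_alg f \<inter> mat.span {H} = {0})"
proof -
  interpret msetup A \<alpha> using alpha_pos A_inv by unfold_locales
  have fg: "lie_alg f = g" by (simp add: f_def)
  have tH0: "trace H0 = of_nat d" by (simp add: trace_H0 d_def)
  have uniq: "H = H0" if "H \<in> centralizer (lie_alg f)" "trace H = of_nat d"
      "\<forall>M\<in>lie_alg f. trace (H ** M) = 0" for H
    using H_unique that by (simp add: fg d_def)
  have H0ok: "H0 \<in> centralizer (lie_alg f) \<and> trace H0 = of_nat d \<and> (\<forall>M\<in>lie_alg f. trace (H0 ** M) = 0)"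
    using H0_cent tH0 trace_H0_M by (simp add: fg)
  have av_eq: "av = (\<lambda>i. of_nat (\<alpha> i))" by (simp add: fun_eq_iff av_def)
  have P: "\<exists>P. invertible P \<and> H0 = P ** diag_mat (\<lambda>i. of_nat (\<alpha> i)) ** matrix_inv P"
    by (rule exI[of _ "matrix_inv A"])
       (simp add: invertible_minv[OF A_inv] minv_minv[OF A_inv] H0_def uc_def av_eq)
  show ?thesis
  proof (intro conjI allI impI)
    show "mat.dim (centralizer (lie_alg f)) = CARD('n)" using dim_cent by (simp add: fg)
    show "\<exists>!H. H \<in> centralizer (lie_alg f) \<and> trace H = of_nat d \<and> (\<forall>M\<in>lie_alg f. trace (H ** M) = 0)"
      using H0ok uniq by blast
  next
    fix H assume h: "H \<in> centralizer (lie_alg f) \<and> trace H = of_nat d \<and> (\<forall>M\<in>lie_alg f. trace (H ** M) = 0)"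
    then have "H = H0" using uniq by blast
    then show "\<exists>P. invertible P \<and> H = P ** diag_mat (\<lambda>i. of_nat (\<alpha> i)) ** matrix_inv P"
      "centralizer (lie_alg f) = {M + mscale c H | M c. M \<in> lie_alg f}"
      "lie_alg f \<inter> mat.span {H} = {0}"
      using P cent_decomp inter_span by (simp_all add: fg)
  qed
qed

end
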